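(* Let $\psi\in\Psi$ satisfy $\lim_{t\to\infty}\frac{\psi(t\psi(t))}{\psi(t)}=1$. Then for every positive nonincreasing $x=x^*\in M_\psi$ and every $c>0$, $$\frac1{\log T}\int_1^T\frac{dt}{t\psi(t)}\int_0^{ct\psi(t)}x(s)ds=\frac1{\log T}\int_1^T\frac{dt}{t\psi(t)}\int_0^tx(s)ds+o(1)\quad\text{as }T\to\infty.$$
   Context: $\Psi$ is the class of concave increasing functions $\psi$ on $[0,\infty)$ with $\psi(\infty)=\infty$, $\psi(t)=O(t)$ as $t\to0$, $\psi(t)=o(t)$ as $t\to\infty$. $x^*$ denotes the nonincreasing right-continuous rearrangement of $|x|$. $M_\psi$ is the space of bounded measurable $x$ on $(0,\infty)$ with $\sup_{t>0}\frac1{\psi(t)}\int_0^tx^*(s)ds<\infty$. *)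

theory Defs
  imports "HOL-Analysis.Analysis" "HOL-Library.Landau_Symbols"
begin

definition Psi_class :: "(real \<Rightarrow> real) set" where
  "Psi_class = {\<psi>. concave_on {0..} \<psi> \<and> strict_mono_on {0..} \<psi>
      \<and> filterlim \<psi> at_top at_top
      \<and> \<psi> \<in> O[at_right 0](\<lambda>t. t)
      \<and> \<psi> \<in> o[at_top](\<lambda>t. t)}"

definition distr_fun :: "(real \<Rightarrow> real) \<Rightarrow> real \<Rightarrow> ennreal" where
  "distr_fun x s = emeasure lborel {u \<in> {0<..}. s < \<bar>x u\<bar>}"

definition rearr :: "(real \<Rightarrow> real) \<Rightarrow> real \<Rightarrow> real" where
  "rearr x t = Inf {s. 0 \<le> s \<and> distr_fun x s \<le> ennreal t}"

definition M_psi :: "(real \<Rightarrow> real) \<Rightarrow> (real \<Rightarrow> real) set" where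
  "M_psi \<psi> = {x. x \<in> borel_measurable (restrict_space lborel {0<..})
      \<and> (\<exists>B. \<forall>u>0. \<bar>x u\<bar> \<le> B)
      \<and> (\<exists>C. \<forall>t>0. (1 / \<psi> t) * (LBINT s=0..t. rearr x s) \<le> C)}"

end

theory Submission
  imports Defs
begin

lemma inv_has_integral:
  fixes a b :: real
  assumes "0 < a" "a \<le> b"
  shows "((\<lambda>x. 1 / x) has_integral (ln b - ln a)) {a..b}"
proof -
  have "((\<lambda>x. 1 / x) has_integral (ln b - ln a)) {a..b}"
    using assms
    by (intro fundamental_theorem_of_calculus)
       (auto intro!: derivative_eq_intros simp: has_real_derivative_iff_has_vector_derivative[symmetric] field_simps)
  then show ?thesis .
qed

lemma bdd_integrable_on:
  fixes f :: "real \<Rightarrow> real"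
  assumes "f \<in> borel_measurable borel" "\<And>x. x \<in> {a..b} \<Longrightarrow> \<bar>f x\<bar> \<le> K"
  shows "f integrable_on {a..b}" "set_integrable lborel {a..b} f"
proof -
  show "set_integrable lborel {a..b} f"
    unfolding set_integrable_def
    by (rule integrableI_bounded_set[where A="{a..b}" and B=K]) (use assms in \<open>auto split: split_indicator simp: emeasure_lborel_Icc_eq\<close>)
  then show "f integrable_on {a..b}" by (rule set_borel_integral_eq_integral(1))
qed

locale L =
  fixes \<psi> X :: "real \<Rightarrow> real" and c C :: real
  assumes psi_pos: "\<And>t. 0 < t \<Longrightarrow> 0 < \<psi> t"
    and psi_mono: "\<And>s t. 0 < s \<Longrightarrow> s \<le> t \<Longrightarrow> \<psi> s \<le> \<psi> t"
    and psi_top: "filterlim \<psi> at_top at_top"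
    and hyp: "((\<lambda>t. \<psi> (t * \<psi> t) / \<psi> t) \<longlongrightarrow> 1) at_top"
    and X_nonneg: "\<And>u. 0 \<le> u \<Longrightarrow> 0 \<le> X u"
    and X_mono: "\<And>u v. 0 \<le> u \<Longrightarrow> u \<le> v \<Longrightarrow> X u \<le> X v"
    and X_le: "\<And>u. 0 < u \<Longrightarrow> X u \<le> C * \<psi> u"
    and c_pos: "0 < c"
    and psi_meas: "\<psi> \<in> borel_measurable borel"
    and X_meas: "X \<in> borel_measurable borel"
begin

definition "a t = (1 / (t * \<psi> t)) * X (c * t * \<psi> t)"
definition "b t = (1 / (t * \<psi> t)) * X t"

lemma C_nonneg: "0 \<le> C"
proof -
  have "0 \<le> X 1" by (rule X_nonneg) simp
  also have "\<dots> \<le> C * \<psi> 1" by (rule X_le) simp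
  finally show ?thesis using psi_pos[of 1] by (simp add: zero_le_mult_iff)
qed

lemma g_mono: "0 < s \<Longrightarrow> s \<le> t \<Longrightarrow> c * s * \<psi> s \<le> c * t * \<psi> t"
  using psi_mono[of s t] psi_pos[of s] c_pos
  by (intro mult_mono mult_left_mono) auto

lemma g_pos: "0 < t \<Longrightarrow> 0 < c * t * \<psi> t"
  using psi_pos[of t] c_pos by simp

lemma a_nonneg: "0 < t \<Longrightarrow> 0 \<le> a t"
  unfolding a_def using psi_pos[of t] X_nonneg[of "c * t * \<psi> t"] g_pos[of t] by simp

lemma b_nonneg: "0 < t \<Longrightarrow> 0 \<le> b t"
  unfolding b_def using psi_pos[of t] X_nonneg[of t] by simp

lemma inv_mono: "0 < s \<Longrightarrow> s \<le> t \<Longrightarrow> 1 / (t * \<psi> t) \<le> 1 / (s * \<psi> s)"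
  using psi_mono[of s t] psi_pos[of s] psi_pos[of t]
  by (intro divide_left_mono mult_mono mult_pos_pos) auto

lemma a_meas: "a \<in> borel_measurable borel"
  unfolding a_def[abs_def] using psi_meas X_meas
  by (intro borel_measurable_times borel_measurable_divide measurable_compose[OF _ X_meas]) auto

lemma b_meas: "b \<in> borel_measurable borel"
  unfolding b_def[abs_def] using psi_meas X_meas
  by (intro borel_measurable_times borel_measurable_divide) auto

lemma a_bound:
  assumes "0 < \<alpha>" "t \<in> {\<alpha>..\<beta>}"
  shows "\<bar>a t\<bar> \<le> (1 / (\<alpha> * \<psi> \<alpha>)) * X (c * \<beta> * \<psi> \<beta>)"
proof -
  from assms have t: "0 < t" "\<alpha> \<le> t" "t \<le> \<beta>" by auto
  have "a t \<le> (1 / (\<alpha> * \<psi> \<alpha>)) * X (c * \<beta> * \<psi> \<beta>)"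
    unfolding a_def
    using inv_mono[of \<alpha> t] X_mono[of "c * t * \<psi> t" "c * \<beta> * \<psi> \<beta>"] g_mono[of t \<beta>] g_pos[of t] t
      X_nonneg[of "c * t * \<psi> t"] psi_pos[of t] psi_pos[of \<alpha>] \<open>0 < \<alpha>\<close>
    by (intro mult_mono) auto
  then show ?thesis using a_nonneg[OF t(1)] by simp
qed

lemma a_int: "0 < \<alpha> \<Longrightarrow> a integrable_on {\<alpha>..\<beta>}"
  by (rule bdd_integrable_on(1)[OF a_meas a_bound])

lemma a_sint: "0 < \<alpha> \<Longrightarrow> set_integrable lborel {\<alpha>..\<beta>} a"
  by (rule bdd_integrable_on(2)[OF a_meas a_bound])

lemma b_bound:
  assumes "0 < \<alpha>" "t \<in> {\<alpha>..\<beta>}"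
  shows "\<bar>b t\<bar> \<le> (1 / (\<alpha> * \<psi> \<alpha>)) * X \<beta>"
proof -
  from assms have t: "0 < t" "\<alpha> \<le> t" "t \<le> \<beta>" by auto
  have "b t \<le> (1 / (\<alpha> * \<psi> \<alpha>)) * X \<beta>"
    unfolding b_def
    using inv_mono[of \<alpha> t] X_mono[of t \<beta>] t X_nonneg[of t] psi_pos[of t] psi_pos[of \<alpha>] \<open>0 < \<alpha>\<close>
    by (intro mult_mono) auto
  then show ?thesis using b_nonneg[OF t(1)] by simp
qed

lemma b_int: "0 < \<alpha> \<Longrightarrow> b integrable_on {\<alpha>..\<beta>}"
  by (rule bdd_integrable_on(1)[OF b_meas b_bound])

lemma b_sint: "0 < \<alpha> \<Longrightarrow> set_integrable lborel {\<alpha>..\<beta>} b"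
  by (rule bdd_integrable_on(2)[OF b_meas b_bound])

lemma b_le: "0 < t \<Longrightarrow> b t \<le> C / t"
proof -
  assume t: "0 < t"
  have "b t \<le> (1 / (t * \<psi> t)) * (C * \<psi> t)"
    unfolding b_def using X_le[OF t] psi_pos[OF t] t by (intro mult_left_mono) auto
  also have "\<dots> = C / t" using psi_pos[OF t] by simp
  finally show ?thesis .
qed

lemma hyp_ev: "0 < \<delta> \<Longrightarrow> \<exists>w0>0. \<forall>w\<ge>w0. \<psi> (w * \<psi> w) \<le> (1 + \<delta>) * \<psi> w"
proof -
  assume d: "0 < \<delta>"
  have "eventually (\<lambda>w. \<psi> (w * \<psi> w) / \<psi> w < 1 + \<delta>) at_top"
    using hyp d by (intro order_tendstoD) auto
  moreover have "eventually (\<lambda>w::real. 0 < w) at_top" by (simp add: eventually_gt_at_top)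
  ultimately have "eventually (\<lambda>w. 0 < w \<and> \<psi> (w * \<psi> w) \<le> (1 + \<delta>) * \<psi> w) at_top"
  proof eventually_elim
    case (elim w)
    then show ?case using psi_pos[of w] by (simp add: divide_less_eq)
  qed
  then obtain w1 where w1: "\<And>w. w \<ge> w1 \<Longrightarrow> 0 < w \<and> \<psi> (w * \<psi> w) \<le> (1 + \<delta>) * \<psi> w"
    by (auto simp: eventually_at_top_linorder)
  show ?thesis using w1[of "w1"] w1 by (intro exI[of _ w1]) auto
qed

lemma psi_large: "\<exists>t0>0. \<forall>t\<ge>t0. K \<le> \<psi> t"
proof -
  have "eventually (\<lambda>t. K \<le> \<psi> t) at_top"
    using psi_top by (simp add: filterlim_at_top)
  then obtain t1 where "\<And>t. t \<ge> t1 \<Longrightarrow> K \<le> \<psi> t" by (auto simp: eventually_at_top_linorder)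
  then show ?thesis by (intro exI[of _ "max t1 1"]) auto
qed

lemma logpsi: "0 < \<eta> \<Longrightarrow> \<exists>T0. \<forall>T\<ge>T0. ln (\<psi> T) \<le> \<eta> * ln T"
proof -
  assume eta: "0 < \<eta>"
  obtain w0 where w0: "w0 > 0" "\<And>w. w \<ge> w0 \<Longrightarrow> \<psi> (w * \<psi> w) \<le> 2 * \<psi> w"
    using hyp_ev[of 1] by auto
  define Lm0 where "Lm0 = 2 * ln 2 / \<eta>"
  have Lm0: "0 < Lm0" unfolding Lm0_def using eta by simp
  obtain t0 where t0: "t0 > 0" "\<And>t. t \<ge> t0 \<Longrightarrow> exp Lm0 \<le> \<psi> t"
    using psi_large[of "exp Lm0"] by auto
  define s0 where "s0 = max (max w0 t0) 1"
  have s0: "s0 \<ge> w0" "s0 \<ge> t0" "s0 \<ge> 1" unfolding s0_def by auto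
  define Lm where "Lm = ln (\<psi> s0)"
  have ps0: "exp Lm0 \<le> \<psi> s0" using t0(2)[OF s0(2)] .
  then have "Lm0 \<le> Lm" unfolding Lm_def using ln_exp[of Lm0] ln_le_cancel_iff[of "exp Lm0" "\<psi> s0"]
      exp_gt_zero[of Lm0] by linarith
  with Lm0 have Lm: "0 < Lm" "Lm0 \<le> Lm" by auto
  have ps1: "1 < \<psi> s0" using ps0 Lm0 by (meson less_le_trans one_less_exp_iff)
  define s where "s k = ((\<lambda>s. s * \<psi> s) ^^ k) s0" for k
  have sSuc: "s (Suc k) = s k * \<psi> (s k)" for k unfolding s_def by simp
  have claim1: "s0 \<le> s k \<and> ln s0 + k * Lm \<le> ln (s k) \<and> ln (\<psi> (s k)) \<le> k * ln 2 + Lm" for k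
  proof (induction k)
    case 0
    then show ?case by (simp add: s_def Lm_def)
  next
    case (Suc k)
    then have sk: "s0 \<le> s k" "ln s0 + k * Lm \<le> ln (s k)" "ln (\<psi> (s k)) \<le> k * ln 2 + Lm" by auto
    have skpos: "0 < s k" using sk(1) s0(3) by linarith
    have psk: "\<psi> s0 \<le> \<psi> (s k)" using psi_mono[of s0 "s k"] sk(1) s0(3) by auto
    have pskpos: "0 < \<psi> (s k)" using psk ps1 by linarith
    have "s k \<le> s k * \<psi> (s k)" using psk ps1 skpos by (simp add: mult_le_cancel_left1)
    then have A: "s0 \<le> s (Suc k)" using sk(1) sSuc[of k] by linarith
    have "ln (s (Suc k)) = ln (s k) + ln (\<psi> (s k))" using sSuc[of k] skpos pskpos by (simp add: ln_mult)
    moreover have "Lm \<le> ln (\<psi> (s k))" unfolding Lm_def using psk ps1 by simp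
    ultimately have B: "ln s0 + Suc k * Lm \<le> ln (s (Suc k))" using sk(2) by (simp add: algebra_simps)
    have "\<psi> (s (Suc k)) \<le> 2 * \<psi> (s k)" using w0(2)[of "s k"] sk(1) s0(1) sSuc[of k] by simp
    moreover have "0 < \<psi> (s (Suc k))" using psi_pos A s0(3) by simp
    ultimately have "ln (\<psi> (s (Suc k))) \<le> ln (2 * \<psi> (s k))" by simp
    also have "\<dots> = ln 2 + ln (\<psi> (s k))" using pskpos by (simp add: ln_mult)
    finally have C: "ln (\<psi> (s (Suc k))) \<le> Suc k * ln 2 + Lm" using sk(3) by (simp add: algebra_simps)
    show ?case using A B C by blast
  qed
  have claim2: "\<forall>T. s0 \<le> T \<longrightarrow> T \<le> s (Suc k) \<longrightarrow> ln (\<psi> T) \<le> (\<eta>/2) * ln T + ln 2 + Lm" for k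
  proof (induction k)
    case 0
    show ?case
    proof (intro allI impI)
      fix T assume T: "s0 \<le> T" "T \<le> s (Suc 0)"
      have "\<psi> T \<le> \<psi> (s (Suc 0))" using psi_mono[of T "s (Suc 0)"] T s0(3) by auto
      moreover have "0 < \<psi> T" using psi_pos T s0(3) by simp
      ultimately have "ln (\<psi> T) \<le> ln (\<psi> (s (Suc 0)))" by simp
      also have "\<dots> \<le> ln 2 + Lm" using claim1[of 1] by simp
      finally have "ln (\<psi> T) \<le> ln 2 + Lm" .
      moreover have "0 \<le> (\<eta>/2) * ln T" using T s0(3) eta by simp
      ultimately show "ln (\<psi> T) \<le> (\<eta>/2) * ln T + ln 2 + Lm" by linarith
    qed
  next
    case (Suc k)
    show ?case
    proof (intro allI impI)
      fix T assume T: "s0 \<le> T" "T \<le> s (Suc (Suc k))"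
      show "ln (\<psi> T) \<le> (\<eta>/2) * ln T + ln 2 + Lm"
      proof (cases "T \<le> s (Suc k)")
        case True then show ?thesis using Suc T by blast
      next
        case False
        have "\<psi> T \<le> \<psi> (s (Suc (Suc k)))" using psi_mono[of T "s (Suc (Suc k))"] T s0(3) by auto
        moreover have "0 < \<psi> T" using psi_pos T s0(3) by simp
        ultimately have "ln (\<psi> T) \<le> ln (\<psi> (s (Suc (Suc k))))" by simp
        also have "\<dots> \<le> Suc (Suc k) * ln 2 + Lm" using claim1[of "Suc (Suc k)"] by simp
        finally have 1: "ln (\<psi> T) \<le> Suc (Suc k) * ln 2 + Lm" .
        have "ln s0 + Suc k * Lm \<le> ln (s (Suc k))" using claim1[of "Suc k"] by simp
        moreover have "ln (s (Suc k)) \<le> ln T" using False claim1[of "Suc k"] s0(3) by simp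
        moreover have "0 \<le> ln s0" using s0(3) by simp
        moreover have "Suc k * Lm0 \<le> Suc k * Lm" using Lm by (intro mult_left_mono) auto
        ultimately have "Suc k * Lm0 \<le> ln T" by linarith
        then have "(\<eta>/2) * (Suc k * Lm0) \<le> (\<eta>/2) * ln T" using eta by (intro mult_left_mono) auto
        moreover have "(\<eta>/2) * (Suc k * Lm0) = Suc k * ln 2" unfolding Lm0_def using eta by simp
        ultimately have "Suc k * ln 2 \<le> (\<eta>/2) * ln T" by linarith
        then show ?thesis using 1 by (simp add: algebra_simps)
      qed
    qed
  qed
  have claim3: "\<exists>k. T \<le> s (Suc k)" if T: "s0 \<le> T" for T
  proof -
    obtain n :: nat where n: "ln T / Lm \<le> real n" using real_arch_simple by blast
    have "ln T \<le> real n * Lm" using n Lm(1) by (simp add: divide_le_eq)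
    also have "\<dots> \<le> ln s0 + real (Suc n) * Lm"
    proof -
      have "0 \<le> ln s0" using s0(3) by simp
      moreover have "real (Suc n) * Lm = real n * Lm + Lm" by (simp add: algebra_simps)
      ultimately show ?thesis using Lm(1) by linarith
    qed
    also have "\<dots> \<le> ln (s (Suc n))" using claim1[of "Suc n"] by blast
    finally have "ln T \<le> ln (s (Suc n))" .
    moreover have "0 < T" "0 < s (Suc n)" using T s0(3) claim1[of "Suc n"] by auto
    ultimately show ?thesis by (intro exI[of _ n]) simp
  qed
  define T0 where "T0 = max s0 (exp (2 * (ln 2 + Lm) / \<eta>))"
  show ?thesis
  proof (intro exI[of _ T0] allI impI)
    fix T assume T: "T0 \<le> T"
    then have Ts0: "s0 \<le> T" unfolding T0_def by simp
    then obtain k where "T \<le> s (Suc k)" using claim3 by blast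
    then have 1: "ln (\<psi> T) \<le> (\<eta>/2) * ln T + ln 2 + Lm" using claim2 Ts0 by blast
    have "exp (2 * (ln 2 + Lm) / \<eta>) \<le> T" using T unfolding T0_def by simp
    then have "ln (exp (2 * (ln 2 + Lm) / \<eta>)) \<le> ln T" using Ts0 s0(3)
      by (subst ln_le_cancel_iff) auto
    then have "2 * (ln 2 + Lm) / \<eta> \<le> ln T" by simp
    then have "2 * (ln 2 + Lm) \<le> \<eta> * ln T" using eta by (simp add: divide_le_eq mult.commute)
    then show "ln (\<psi> T) \<le> \<eta> * ln T" using 1 by simp
  qed
qed

lemma ratio_bound:
  assumes d: "0 < \<delta>" "\<delta> \<le> 1"
  shows "\<exists>t0>0. \<forall>t\<ge>t0. \<psi> (c * (4 * t) * \<psi> (4 * t)) \<le> (1 + \<delta>) * ((1 + \<delta>) * \<psi> t)"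
proof -
  obtain w0 where w0: "w0 > 0" "\<And>w. w \<ge> w0 \<Longrightarrow> \<psi> (w * \<psi> w) \<le> (1 + \<delta>) * \<psi> w"
    using hyp_ev[OF d(1)] by auto
  obtain t1 where t1: "t1 > 0" "\<And>t. t \<ge> t1 \<Longrightarrow> max 4 (8 * c) \<le> \<psi> t"
    using psi_large[of "max 4 (8 * c)"] by auto
  show ?thesis
  proof (intro exI[of _ "max (max w0 t1) 1"] conjI allI impI)
    fix t assume t: "max (max w0 t1) 1 \<le> t"
    then have tw0: "w0 \<le> t" and tpos: "0 < t" and pt: "4 \<le> \<psi> t" "8 * c \<le> \<psi> t"
      using t1(2)[of t] by auto
    define w where "w = t * \<psi> t"
    have "4 * t \<le> w" unfolding w_def using pt tpos by simp
    then have wt: "t \<le> w" "0 < w" using tpos by auto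
    have p4: "\<psi> (4 * t) \<le> (1 + \<delta>) * \<psi> t"
      using psi_mono[of "4*t" w] \<open>4 * t \<le> w\<close> tpos w0(2)[OF tw0] unfolding w_def by auto
    have pw: "\<psi> t \<le> \<psi> w" using psi_mono[OF tpos wt(1)] .
    have "c * (4 * t) * \<psi> (4 * t) \<le> c * (4 * t) * ((1 + \<delta>) * \<psi> t)"
      using p4 c_pos tpos by (intro mult_left_mono) auto
    also have "\<dots> \<le> c * (4 * t) * (2 * \<psi> t)"
      using d c_pos tpos psi_pos[OF tpos] by (intro mult_left_mono mult_right_mono) auto
    also have "\<dots> = (8 * c) * w" unfolding w_def by simp
    also have "\<dots> \<le> \<psi> w * w" using pt(2) pw wt by (intro mult_right_mono) auto
    finally have le: "c * (4 * t) * \<psi> (4 * t) \<le> w * \<psi> w" by (simp add: mult.commute)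
    have "0 < c * (4 * t) * \<psi> (4 * t)" using g_pos[of "4*t"] tpos by simp
    then have "\<psi> (c * (4 * t) * \<psi> (4 * t)) \<le> \<psi> (w * \<psi> w)" using psi_mono le by blast
    also have "\<dots> \<le> (1 + \<delta>) * \<psi> w" using w0(2) tw0 wt by simp
    also have "\<psi> w \<le> (1 + \<delta>) * \<psi> t" using w0(2)[OF tw0] unfolding w_def .
    then have "(1 + \<delta>) * \<psi> w \<le> (1 + \<delta>) * ((1 + \<delta>) * \<psi> t)" using d by (intro mult_left_mono) auto
    finally show "\<psi> (c * (4 * t) * \<psi> (4 * t)) \<le> (1 + \<delta>) * ((1 + \<delta>) * \<psi> t)" .
  qed (use w0 t1 in auto)
qed

lemma int_inv:
  fixes \<alpha> \<beta> k :: real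
  assumes "0 < \<alpha>" "\<alpha> \<le> \<beta>"
  shows "(\<lambda>s. k * (1 / s)) integrable_on {\<alpha>..\<beta>}"
    "integral {\<alpha>..\<beta>} (\<lambda>s. k * (1 / s)) = k * (ln \<beta> - ln \<alpha>)"
proof -
  have "((\<lambda>s. k * (1 / s)) has_integral k * (ln \<beta> - ln \<alpha>)) {\<alpha>..\<beta>}"
    using inv_has_integral[OF assms] by (rule has_integral_mult_right)
  then show "(\<lambda>s. k * (1 / s)) integrable_on {\<alpha>..\<beta>}"
    "integral {\<alpha>..\<beta>} (\<lambda>s. k * (1 / s)) = k * (ln \<beta> - ln \<alpha>)"
    by (auto simp: integrable_on_def integral_unique)
qed

lemma block:
  assumes t: "0 < t" and K: "\<psi> (c * (4 * t) * \<psi> (4 * t)) \<le> K * \<psi> t"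
  shows "integral {t..2*t} a \<le> K * integral {c * (2*t) * \<psi> (2*t)..c * (4*t) * \<psi> (4*t)} b"
proof -
  define G2 where "G2 = c * (2*t) * \<psi> (2*t)"
  define G4 where "G4 = c * (4*t) * \<psi> (4*t)"
  have G2pos: "0 < G2" unfolding G2_def using g_pos[of "2*t"] t by simp
  have G24: "G2 \<le> G4" unfolding G2_def G4_def using g_mono[of "2*t" "4*t"] t by simp
  have pt: "0 < \<psi> t" using psi_pos t by simp
  have pG4: "0 < \<psi> G4" using psi_pos G2pos G24 by simp
  have XG2: "0 \<le> X G2" using X_nonneg G2pos by simp
  have "0 < K * \<psi> t" using K pG4 unfolding G4_def by linarith
  then have Kpos: "0 < K" using pt by (simp add: zero_less_mult_iff)
  have "integral {t..2*t} a \<le> integral {t..2*t} (\<lambda>s. (X G2 / \<psi> t) * (1 / s))"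
  proof (rule integral_le)
    show "a integrable_on {t..2*t}" using a_int t by simp
    show "(\<lambda>s. (X G2 / \<psi> t) * (1 / s)) integrable_on {t..2*t}" by (rule int_inv(1)) (use t in auto)
    fix s assume "s \<in> {t..2*t}"
    then have s: "t \<le> s" "s \<le> 2*t" "0 < s" using t by auto
    have ps: "\<psi> t \<le> \<psi> s" using psi_mono t s by simp
    have "a s = X (c * s * \<psi> s) / (s * \<psi> s)" unfolding a_def by simp
    also have "\<dots> \<le> X G2 / (s * \<psi> s)"
      using X_mono[of "c * s * \<psi> s" G2] g_mono[of s "2*t"] g_pos[of s] s psi_pos[of s]
      unfolding G2_def by (intro divide_right_mono) auto
    also have "\<dots> \<le> X G2 / (s * \<psi> t)"
      using XG2 s pt ps by (intro divide_left_mono mult_left_mono mult_pos_pos) auto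
    also have "\<dots> = (X G2 / \<psi> t) * (1 / s)" by simp
    finally show "a s \<le> (X G2 / \<psi> t) * (1 / s)" .
  qed
  also have "\<dots> = (X G2 / \<psi> t) * (ln (2*t) - ln t)" by (rule int_inv(2)) (use t in auto)
  also have "\<dots> = (X G2 / \<psi> t) * ln 2" using t by (simp add: ln_mult)
  finally have A: "integral {t..2*t} a \<le> (X G2 / \<psi> t) * ln 2" .
  have "integral {G2..G4} (\<lambda>u. (X G2 / \<psi> G4) * (1 / u)) \<le> integral {G2..G4} b"
  proof (rule integral_le)
    show "b integrable_on {G2..G4}" using b_int G2pos by simp
    show "(\<lambda>s. (X G2 / \<psi> G4) * (1 / s)) integrable_on {G2..G4}" by (rule int_inv(1)) (use G2pos G24 in auto)
    fix u assume "u \<in> {G2..G4}"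
    then have u: "G2 \<le> u" "u \<le> G4" "0 < u" using G2pos by auto
    have pu: "\<psi> u \<le> \<psi> G4" "0 < \<psi> u" using psi_mono psi_pos u by auto
    have "(X G2 / \<psi> G4) * (1 / u) = X G2 / (u * \<psi> G4)" by simp
    also have "\<dots> \<le> X G2 / (u * \<psi> u)"
      using XG2 u pu by (intro divide_left_mono mult_left_mono mult_pos_pos) auto
    also have "\<dots> \<le> X u / (u * \<psi> u)"
      using X_mono[of G2 u] u G2pos pu by (intro divide_right_mono) auto
    also have "\<dots> = b u" unfolding b_def by simp
    finally show "(X G2 / \<psi> G4) * (1 / u) \<le> b u" .
  qed
  moreover have "integral {G2..G4} (\<lambda>u. (X G2 / \<psi> G4) * (1 / u)) = (X G2 / \<psi> G4) * (ln G4 - ln G2)"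
    by (rule int_inv(2)) (use G2pos G24 in auto)
  moreover have "ln 2 \<le> ln G4 - ln G2"
  proof -
    have "G4 = 2 * (\<psi> (4*t) / \<psi> (2*t)) * G2" unfolding G2_def G4_def using psi_pos[of "2*t"] t by simp
    moreover have "1 \<le> \<psi> (4*t) / \<psi> (2*t)" using psi_mono[of "2*t" "4*t"] psi_pos[of "2*t"] t by simp
    ultimately have "2 * G2 * 1 \<le> 2 * G2 * (\<psi> (4*t) / \<psi> (2*t))" "G4 = 2 * G2 * (\<psi> (4*t) / \<psi> (2*t))"
      using G2pos by (intro mult_left_mono, simp_all)
    then have "2 * G2 \<le> G4" by simp
    then have "ln (2 * G2) \<le> ln G4" using G2pos by simp
    then show ?thesis using G2pos by (simp add: ln_mult)
  qed
  moreover have "(X G2 / \<psi> G4) * ln 2 \<le> (X G2 / \<psi> G4) * (ln G4 - ln G2)"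
    using XG2 pG4 \<open>ln 2 \<le> ln G4 - ln G2\<close> by (intro mult_left_mono) auto
  ultimately have B: "(X G2 / \<psi> G4) * ln 2 \<le> integral {G2..G4} b" by linarith
  have "X G2 / \<psi> t \<le> K * (X G2 / \<psi> G4)"
  proof -
    have "X G2 * \<psi> G4 \<le> X G2 * (K * \<psi> t)" using K XG2 unfolding G4_def by (intro mult_left_mono) auto
    then show ?thesis using pt pG4 by (simp add: field_simps)
  qed
  then have "(X G2 / \<psi> t) * ln 2 \<le> (K * (X G2 / \<psi> G4)) * ln 2" by (rule mult_right_mono) simp
  also have "\<dots> = K * ((X G2 / \<psi> G4) * ln 2)" by (simp only: mult.assoc)
  finally have "(X G2 / \<psi> t) * ln 2 \<le> K * ((X G2 / \<psi> G4) * ln 2)" .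
  also have "\<dots> \<le> K * integral {G2..G4} b" using B Kpos by (intro mult_left_mono) auto
  finally show ?thesis using A unfolding G2_def G4_def by linarith
qed

lemma sum_blocks:
  assumes K: "\<And>k. k \<ge> k0 \<Longrightarrow> \<psi> (c * (4 * 2^k) * \<psi> (4 * 2^k)) \<le> K * \<psi> (2^k)"
  shows "integral {2^k0..2^(k0+n)} a \<le> K * integral {c * 2^(k0+1) * \<psi> (2^(k0+1))..c * 2^(k0+n+1) * \<psi> (2^(k0+n+1))} b"
proof (induction n)
  case 0
  then show ?case by simp
next
  case (Suc n)
  define p where "p = (2::real)^(k0+n)"
  have p: "0 < p" "1 \<le> p" unfolding p_def by simp_all
  have p1: "(2::real)^(k0 + Suc n) = 2 * p" "(2::real)^(k0 + n + 1) = 2 * p"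
    "(2::real)^(k0 + Suc n + 1) = 4 * p" unfolding p_def by simp_all
  have pk0: "(2::real)^k0 \<le> p" unfolding p_def by simp
  have "integral {2^k0..2 * p} a = integral {2^k0..p} a + integral {p..2*p} a"
    using pk0 p a_int[of "2^k0" "2*p"] by (intro Henstock_Kurzweil_Integration.integral_combine[symmetric]) simp_all
  also have "integral {p..2*p} a \<le> K * integral {c * (2*p) * \<psi> (2*p)..c * (4*p) * \<psi> (4*p)} b"
    using block[of p K] K[of "k0+n"] p unfolding p_def by simp
  finally have 1: "integral {2^k0..2 * p} a \<le> K * integral {c * 2^(k0+1) * \<psi> (2^(k0+1))..c * (2*p) * \<psi> (2*p)} b
       + K * integral {c * (2*p) * \<psi> (2*p)..c * (4*p) * \<psi> (4*p)} b"
    using Suc unfolding p_def by simp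
  have le1: "c * 2^(k0+1) * \<psi> (2^(k0+1)) \<le> c * (2*p) * \<psi> (2*p)"
    using g_mono[of "2^(k0+1)" "2*p"] pk0 by simp
  have le2: "c * (2*p) * \<psi> (2*p) \<le> c * (4*p) * \<psi> (4*p)"
    using g_mono[of "2*p" "4*p"] p by simp
  have pos: "0 < c * 2^(k0+1) * \<psi> (2^(k0+1))" using g_pos[of "2^(k0+1)"] by simp
  have "integral {c * 2^(k0+1) * \<psi> (2^(k0+1))..c * (2*p) * \<psi> (2*p)} b
       + integral {c * (2*p) * \<psi> (2*p)..c * (4*p) * \<psi> (4*p)} b
      = integral {c * 2^(k0+1) * \<psi> (2^(k0+1))..c * (4*p) * \<psi> (4*p)} b"
    using le1 le2 b_int[OF pos] by (intro Henstock_Kurzweil_Integration.integral_combine) auto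
  with 1 have "integral {2^k0..2 * p} a \<le> K * integral {c * 2^(k0+1) * \<psi> (2^(k0+1))..c * (4*p) * \<psi> (4*p)} b"
    by (simp add: distrib_left[symmetric])
  then show ?case using p1 by simp
qed

lemma find_pow:
  fixes T :: real
  assumes "2^k0 \<le> T"
  shows "\<exists>m\<ge>k0. T \<le> 2^m \<and> 2^m \<le> 2 * T"
proof -
  have ind: "\<forall>T. 2^k0 \<le> T \<longrightarrow> T \<le> 2^(k0+n) \<longrightarrow> (\<exists>m\<ge>k0. T \<le> (2::real)^m \<and> 2^m \<le> 2 * T)" for n
  proof (induction n)
    case 0
    then show ?case by (intro allI impI exI[of _ k0]) auto
  next
    case (Suc n)
    show ?case
    proof (intro allI impI)
      fix T :: real assume T: "2^k0 \<le> T" "T \<le> 2^(k0 + Suc n)"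
      show "\<exists>m\<ge>k0. T \<le> (2::real)^m \<and> 2^m \<le> 2 * T"
      proof (cases "T \<le> 2^(k0+n)")
        case True then show ?thesis using Suc T by blast
      next
        case False
        then show ?thesis using T by (intro exI[of _ "k0 + Suc n"]) auto
      qed
    qed
  qed
  obtain n where "T < (2::real)^n" using real_arch_pow[of 2 T] by auto
  then have "T \<le> 2^(k0+n)"
    by (smt (verit) one_le_numeral power_add power_increasing le_add2)
  then show ?thesis using ind assms by blast
qed

lemma b_int_le:
  assumes "0 < \<alpha>" "\<alpha> \<le> \<beta>"
  shows "integral {\<alpha>..\<beta>} b \<le> C * (ln \<beta> - ln \<alpha>)"
proof -
  have "integral {\<alpha>..\<beta>} b \<le> integral {\<alpha>..\<beta>} (\<lambda>u. C * (1 / u))"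
    using assms b_int int_inv(1)[OF assms, of C] b_le by (intro integral_le) auto
  also have "\<dots> = C * (ln \<beta> - ln \<alpha>)" by (rule int_inv(2)[OF assms])
  finally show ?thesis .
qed

lemma a_int_nonneg: "0 < \<alpha> \<Longrightarrow> 0 \<le> integral {\<alpha>..\<beta>} a"
  using a_int a_nonneg by (intro integral_nonneg) auto

lemma b_int_nonneg: "0 < \<alpha> \<Longrightarrow> 0 \<le> integral {\<alpha>..\<beta>} b"
  using b_int b_nonneg by (intro integral_nonneg) auto

lemma comb_a: "0 < \<alpha> \<Longrightarrow> \<alpha> \<le> \<gamma> \<Longrightarrow> \<gamma> \<le> \<beta> \<Longrightarrow>
   integral {\<alpha>..\<beta>} a = integral {\<alpha>..\<gamma>} a + integral {\<gamma>..\<beta>} a"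
  using a_int by (intro Henstock_Kurzweil_Integration.integral_combine[symmetric]) auto

lemma comb_b: "0 < \<alpha> \<Longrightarrow> \<alpha> \<le> \<gamma> \<Longrightarrow> \<gamma> \<le> \<beta> \<Longrightarrow>
   integral {\<alpha>..\<beta>} b = integral {\<alpha>..\<gamma>} b + integral {\<gamma>..\<beta>} b"
  using b_int by (intro Henstock_Kurzweil_Integration.integral_combine[symmetric]) auto

lemma lower: "\<exists>t1\<ge>1. \<forall>T\<ge>t1. integral {1..t1} a - integral {1..t1} b \<le> integral {1..T} a - integral {1..T} b"
proof -
  obtain tc where tc: "tc > 0" "\<And>t. t \<ge> tc \<Longrightarrow> 1 / c \<le> \<psi> t" using psi_large[of "1/c"] by auto
  define t1 where "t1 = max tc 1"
  show ?thesis
  proof (intro exI[of _ t1] conjI allI impI)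
    show "1 \<le> t1" unfolding t1_def by simp
    fix T assume T: "t1 \<le> T"
    have "integral {t1..T} b \<le> integral {t1..T} a"
    proof (rule integral_le)
      show "b integrable_on {t1..T}" "a integrable_on {t1..T}" using b_int a_int unfolding t1_def by auto
      fix t assume "t \<in> {t1..T}"
      then have t: "tc \<le> t" "1 \<le> t" unfolding t1_def by auto
      have "1 \<le> c * \<psi> t" using tc(2)[OF t(1)] c_pos by (simp add: divide_le_eq mult.commute)
      then have "t * 1 \<le> t * (c * \<psi> t)" using t by (intro mult_left_mono) auto
      then have "t \<le> c * t * \<psi> t" by (simp add: mult_ac)
      then have "X t \<le> X (c * t * \<psi> t)" using X_mono t by simp
      then show "b t \<le> a t" unfolding a_def b_def using psi_pos[of t] t by (intro mult_left_mono) auto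
    qed
    moreover have "integral {1..T} a = integral {1..t1} a + integral {t1..T} a"
      using T by (intro comb_a) (auto simp: t1_def)
    moreover have "integral {1..T} b = integral {1..t1} b + integral {t1..T} b"
      using T by (intro comb_b) (auto simp: t1_def)
    ultimately show "integral {1..t1} a - integral {1..t1} b \<le> integral {1..T} a - integral {1..T} b"
      by linarith
  qed
qed

lemma upper:
  assumes eps: "0 < \<epsilon>"
  shows "\<exists>T1. \<forall>T\<ge>T1. integral {1..T} a - integral {1..T} b \<le> \<epsilon> * ln T"
proof -
  define \<delta> where "\<delta> = min 1 (\<epsilon> / (9 * (C + 1)))"
  define \<eta> where "\<eta> = \<epsilon> / (12 * (C + 1))"
  have C1: "0 < C + 1" using C_nonneg by simp
  have d: "0 < \<delta>" "\<delta> \<le> 1" "\<delta> \<le> \<epsilon> / (9 * (C + 1))" unfolding \<delta>_def using eps C1 by auto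
  have eta: "0 < \<eta>" unfolding \<eta>_def using eps C1 by simp
  define K where "K = (1 + \<delta>) * (1 + \<delta>)"
  have dd1: "\<delta> * \<delta> \<le> \<delta> * 1" using d by (intro mult_left_mono) auto
  have Keq: "K = 1 + 2 * \<delta> + \<delta> * \<delta>" unfolding K_def by (simp add: algebra_simps)
  have K: "1 \<le> K" "K \<le> 1 + 3 * \<delta>" "K \<le> 4" using Keq dd1 d zero_le_square[of \<delta>] by linarith+
  obtain t0 where t0: "t0 > 0" "\<And>t. t \<ge> t0 \<Longrightarrow> \<psi> (c * (4 * t) * \<psi> (4 * t)) \<le> K * \<psi> t"
    using ratio_bound[OF d(1,2)] unfolding K_def by (auto simp: mult.assoc)
  obtain tc where tc: "tc > 0" "\<And>t. t \<ge> tc \<Longrightarrow> 1 / c \<le> \<psi> t" using psi_large[of "1/c"] by auto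
  have gid: "t \<le> c * t * \<psi> t" if "tc \<le> t" for t
  proof -
    have t: "0 < t" using that tc by simp
    have "1 \<le> c * \<psi> t" using tc(2)[OF that] c_pos by (simp add: divide_le_eq mult.commute)
    then have "t * 1 \<le> t * (c * \<psi> t)" using t by (intro mult_left_mono) auto
    then show "t \<le> c * t * \<psi> t" by (simp add: mult_ac)
  qed
  obtain k0 where k0: "max t0 tc < (2::real)^k0" using real_arch_pow[of 2 "max t0 tc"] by auto
  obtain w0 where w0: "w0 > 0" "\<And>w. w \<ge> w0 \<Longrightarrow> \<psi> (w * \<psi> w) \<le> (1 + 1) * \<psi> w"
    using hyp_ev[of 1] by auto
  obtain t4 where t4: "t4 > 0" "\<And>t. t \<ge> t4 \<Longrightarrow> 4 \<le> \<psi> t" using psi_large[of 4] by auto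
  obtain T0 where T0: "\<And>T. T \<ge> T0 \<Longrightarrow> ln (\<psi> T) \<le> \<eta> * ln T" using logpsi[OF eta] by auto
  define A0 where "A0 = integral {1..2^k0} a"
  define Tm where "Tm = max (2^k0) (max w0 (max t4 (max T0 1)))"
  have main: "integral {1..T} a - integral {1..T} b
      \<le> A0 + 3 * \<delta> * C * ln T + 4 * C * (ln c + ln 4 + ln 2 + \<eta> * ln T)" if T: "Tm \<le> T" for T
  proof -
    have T1: "1 \<le> T" "(2::real)^k0 \<le> T" "w0 \<le> T" "t4 \<le> T" "T0 \<le> T" using T unfolding Tm_def by auto
    have Tpos: "0 < T" using T1 by simp
    obtain m where m: "m \<ge> k0" "T \<le> 2^m" "(2::real)^m \<le> 2 * T" using find_pow[OF T1(2)] by auto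
    define G where "G = c * 2^(m+1) * \<psi> (2^(m+1))"
    define G0 where "G0 = c * 2^(k0+1) * \<psi> (2^(k0+1))"
    have pk: "(2::real)^k0 \<le> 2^m" using m(1) by simp
    have "integral {1..T} a \<le> integral {1..2^m} a"
      using comb_a[of 1 T "2^m"] m(2) T1 a_int_nonneg[of T "2^m"] by simp
    also have "\<dots> = A0 + integral {2^k0..2^m} a"
      unfolding A0_def using comb_a[of 1 "2^k0" "2^m"] pk by simp
    also have "integral {2^k0..2^m} a \<le> K * integral {G0..G} b"
    proof -
      have "integral {2^k0..2^(k0 + (m - k0))} a \<le> K * integral {G0..c * 2^(k0+(m-k0)+1) * \<psi> (2^(k0+(m-k0)+1))} b"
        unfolding G0_def
      proof (rule sum_blocks)
        fix k assume "k0 \<le> k"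
        then have "(2::real)^k0 \<le> 2^k" by simp
        then have "t0 \<le> 2^k" using k0 by linarith
        then show "\<psi> (c * (4 * 2 ^ k) * \<psi> (4 * 2 ^ k)) \<le> K * \<psi> (2 ^ k)" using t0(2) by blast
      qed
      then show ?thesis using m(1) unfolding G_def by simp
    qed
    finally have s1: "integral {1..T} a \<le> A0 + K * integral {G0..G} b" by simp
    have "(2::real)^k0 \<le> 2^(k0+1)" by simp
    then have "tc \<le> 2^(k0+1)" using k0 by linarith
    then have G0ge: "2^(k0+1) \<le> G0" unfolding G0_def using gid by blast
    have "(1::real) \<le> 2^(k0+1)" by (rule one_le_power) simp
    then have G01: "1 \<le> G0" using G0ge by linarith
    have "(2::real)^k0 \<le> 2^(m+1)" using m(1) by (intro power_increasing) auto
    then have "tc \<le> 2^(m+1)" using k0 by linarith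
    then have "2^(m+1) \<le> G" unfolding G_def using gid by blast
    moreover have "(2::real)^m \<le> 2^(m+1)" by (intro power_increasing) auto
    ultimately have TG: "T \<le> G" using m(2) by linarith
    have G0G: "G0 \<le> G" unfolding G0_def G_def using g_mono[of "2^(k0+1)" "2^(m+1)"] m(1) by simp
    have "integral {G0..G} b \<le> integral {1..G} b"
      using comb_b[of 1 G0 G] G01 G0G b_int_nonneg[of 1 G0] by simp
    also have "\<dots> = integral {1..T} b + integral {T..G} b"
      using comb_b[of 1 T G] T1 TG by simp
    also have "integral {T..G} b \<le> C * (ln G - ln T)" using b_int_le[of T G] Tpos TG by simp
    finally have s2: "integral {G0..G} b \<le> integral {1..T} b + C * (ln G - ln T)" by simp
    have BT: "integral {1..T} b \<le> C * ln T" using b_int_le[of 1 T] T1 by simp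
    have B0: "0 \<le> integral {1..T} b" using b_int_nonneg[of 1 T] by simp
    have lnGT: "0 \<le> ln G - ln T" using TG Tpos by simp
    have "2^(m+1) \<le> 4 * T" using m(3) by simp
    then have "G \<le> c * (4 * T) * \<psi> (4 * T)" unfolding G_def using g_mono[of "2^(m+1)" "4*T"] by simp
    then have "ln G \<le> ln (c * (4 * T) * \<psi> (4 * T))" using TG Tpos
      by (subst ln_le_cancel_iff) linarith+
    also have "\<dots> = ln c + ln 4 + ln T + ln (\<psi> (4 * T))"
      using c_pos Tpos psi_pos[of "4*T"] by (simp add: ln_mult)
    also have "ln (\<psi> (4 * T)) \<le> ln 2 + \<eta> * ln T"
    proof -
      have "4 * T \<le> T * \<psi> T" using t4(2)[OF T1(4)] Tpos by simp
      then have "\<psi> (4 * T) \<le> \<psi> (T * \<psi> T)" using psi_mono Tpos by simp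
      also have "\<dots> \<le> 2 * \<psi> T" using w0(2)[OF T1(3)] by simp
      finally have "ln (\<psi> (4 * T)) \<le> ln (2 * \<psi> T)" using psi_pos[of "4*T"] Tpos by simp
      also have "\<dots> = ln 2 + ln (\<psi> T)" using psi_pos[OF Tpos] by (simp add: ln_mult)
      finally show ?thesis using T0[OF T1(5)] by simp
    qed
    finally have s3: "ln G - ln T \<le> ln c + ln 4 + ln 2 + \<eta> * ln T" by simp
    have "K * integral {G0..G} b \<le> K * (integral {1..T} b + C * (ln G - ln T))"
      using s2 K by (intro mult_left_mono) auto
    also have "\<dots> = integral {1..T} b + (K - 1) * integral {1..T} b + K * (C * (ln G - ln T))"
      by (simp add: algebra_simps)
    also have "(K - 1) * integral {1..T} b \<le> (3 * \<delta>) * (C * ln T)"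
      using K B0 BT d by (intro mult_mono) auto
    also have "K * (C * (ln G - ln T)) \<le> 4 * (C * (ln c + ln 4 + ln 2 + \<eta> * ln T))"
      using K C_nonneg lnGT s3 by (intro mult_mono mult_left_mono) auto
    finally show ?thesis using s1 by (simp add: algebra_simps)
  qed
  define R where "R = A0 + 4 * C * (ln c + ln 4 + ln 2)"
  define T1 where "T1 = max Tm (exp (3 * \<bar>R\<bar> / \<epsilon>))"
  show ?thesis
  proof (intro exI[of _ T1] allI impI)
    fix T assume T: "T1 \<le> T"
    then have Tm: "Tm \<le> T" unfolding T1_def by simp
    then have T1': "1 \<le> T" unfolding Tm_def by simp
    have lnT: "0 \<le> ln T" using T1' by simp
    have "exp (3 * \<bar>R\<bar> / \<epsilon>) \<le> T" using T unfolding T1_def by simp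
    then have "ln (exp (3 * \<bar>R\<bar> / \<epsilon>)) \<le> ln T" using T1' by (subst ln_le_cancel_iff) auto
    then have "3 * \<bar>R\<bar> / \<epsilon> \<le> ln T" by simp
    then have r: "R \<le> (\<epsilon> / 3) * ln T" using eps by (simp add: divide_le_eq field_simps)
    have "3 * \<delta> * C \<le> 3 * (\<epsilon> / (9 * (C + 1))) * C" using d C_nonneg by (intro mult_right_mono) auto
    also have "\<dots> \<le> \<epsilon> / 3" using C1 eps by (simp add: field_simps)
    finally have dd: "3 * \<delta> * C * ln T \<le> (\<epsilon> / 3) * ln T" using lnT by (intro mult_right_mono)
    have "4 * C * \<eta> = \<epsilon> / 3 * (C / (C + 1))" unfolding \<eta>_def using C1 by (simp add: field_simps)
    also have "\<dots> \<le> \<epsilon> / 3" using C1 C_nonneg eps by (simp add: field_simps)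
    finally have ee: "4 * C * \<eta> * ln T \<le> (\<epsilon> / 3) * ln T" using lnT by (intro mult_right_mono)
    have "integral {1..T} a - integral {1..T} b \<le> A0 + 3 * \<delta> * C * ln T + 4 * C * (ln c + ln 4 + ln 2 + \<eta> * ln T)"
      by (rule main[OF Tm])
    also have "\<dots> = R + 3 * \<delta> * C * ln T + 4 * C * \<eta> * ln T" unfolding R_def by (simp add: algebra_simps)
    also have "\<dots> \<le> \<epsilon> * ln T" using r dd ee by linarith
    finally show "integral {1..T} a - integral {1..T} b \<le> \<epsilon> * ln T" .
  qed
qed

lemma limit: "((\<lambda>T. (1 / ln T) * integral {1..T} a - (1 / ln T) * integral {1..T} b) \<longlongrightarrow> 0) at_top"
proof (rule tendstoI)
  fix e :: real assume e: "0 < e"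
  obtain T1 where T1: "\<And>T. T \<ge> T1 \<Longrightarrow> integral {1..T} a - integral {1..T} b \<le> (e/2) * ln T"
    using upper[of "e/2"] e by auto
  obtain t1 where t1: "1 \<le> t1" "\<And>T. T \<ge> t1 \<Longrightarrow>
      integral {1..t1} a - integral {1..t1} b \<le> integral {1..T} a - integral {1..T} b"
    using lower by auto
  define K0 where "K0 = integral {1..t1} a - integral {1..t1} b"
  have "eventually (\<lambda>T. T \<ge> max (max T1 t1) (max 2 (exp (2 * \<bar>K0\<bar> / e)))) at_top"
    by (rule eventually_ge_at_top)
  then show "eventually (\<lambda>T. dist ((1 / ln T) * integral {1..T} a - (1 / ln T) * integral {1..T} b) 0 < e) at_top"
  proof eventually_elim
    case (elim T)
    define D where "D = integral {1..T} a - integral {1..T} b"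
    have T: "T1 \<le> T" "t1 \<le> T" "2 \<le> T" "exp (2 * \<bar>K0\<bar> / e) \<le> T" using elim by auto
    have lnpos: "0 < ln T" using T(3) by simp
    have up: "D \<le> (e/2) * ln T" unfolding D_def using T1[OF T(1)] .
    have lo: "K0 \<le> D" unfolding D_def K0_def using t1(2)[OF T(2)] .
    have "ln (exp (2 * \<bar>K0\<bar> / e)) \<le> ln T" using T(3,4) by (subst ln_le_cancel_iff) auto
    then have "2 * \<bar>K0\<bar> / e \<le> ln T" by simp
    then have "\<bar>K0\<bar> \<le> (e/2) * ln T" using e by (simp add: divide_le_eq field_simps)
    then have "\<bar>D\<bar> \<le> (e/2) * ln T" using up lo by linarith
    then have "\<bar>D\<bar> / ln T \<le> e/2" using lnpos by (simp add: divide_le_eq)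
    moreover have "(1 / ln T) * integral {1..T} a - (1 / ln T) * integral {1..T} b = D / ln T"
      unfolding D_def by (simp add: diff_divide_distrib)
    ultimately have "\<bar>(1 / ln T) * integral {1..T} a - (1 / ln T) * integral {1..T} b\<bar> \<le> e/2"
      using lnpos by (simp add: abs_divide)
    then show ?case using e by (simp add: dist_real_def)
  qed
qed

end

lemma Psi_pos:
  assumes "\<psi> \<in> Psi_class" "0 < t"
  shows "0 < \<psi> t"
proof -
  have sm: "strict_mono_on {0..} \<psi>" and bo: "\<psi> \<in> O[at_right 0](\<lambda>t. t)"
    using assms(1) unfolding Psi_class_def by auto
  have nonneg: "0 \<le> \<psi> u" if u: "0 < u" for u
  proof (rule ccontr)
    assume "\<not> 0 \<le> \<psi> u"
    then have neg: "\<psi> u < 0" by simp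
    define m where "m = - \<psi> u"
    have m: "0 < m" unfolding m_def using neg by simp
    obtain K where K: "K > 0" "eventually (\<lambda>s. norm (\<psi> s) \<le> K * norm s) (at_right 0)"
      using bo by (elim landau_o.bigE) auto
    have "eventually (\<lambda>s. s \<in> {0<..<min u (m / K)}) (at_right (0::real))"
      using u m K by (intro eventually_at_right_real) simp
    with K(2) have "eventually (\<lambda>s::real. False) (at_right 0)"
    proof eventually_elim
      case (elim s)
      then have s: "0 < s" "s < u" "s < m / K" by auto
      have "\<psi> s < \<psi> u" using strict_mono_onD[OF sm, of s u] s by simp
      then have "m < norm (\<psi> s)" unfolding m_def using neg by simp
      moreover have "K * s < m" using s(3) K(1) by (simp add: field_simps)
      ultimately show False using elim s by simp
    qed
    then show False by simp
  qed
  have "\<psi> (t/2) < \<psi> t" using strict_mono_onD[OF sm, of "t/2" t] assms(2) by simp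
  then show ?thesis using nonneg[of "t/2"] assms(2) by simp
qed

lemma Psi_mono:
  assumes "\<psi> \<in> Psi_class" "0 \<le> s" "s \<le> t"
  shows "\<psi> s \<le> \<psi> t"
proof -
  have sm: "strict_mono_on {0..} \<psi>" using assms(1) unfolding Psi_class_def by auto
  show ?thesis
  proof (cases "s = t")
    case False
    then show ?thesis using strict_mono_onD[OF sm, of s t] assms by simp
  qed simp
qed

theorem lemma2p4:
  fixes \<psi> x :: "real \<Rightarrow> real" and c :: real
  assumes "\<psi> \<in> Psi_class"
    and "((\<lambda>t. \<psi> (t * \<psi> t) / \<psi> t) \<longlongrightarrow> 1) at_top"
    and "x \<in> M_psi \<psi>"
    and "\<forall>t>0. x t > 0"
    and "antimono_on {0<..} x"
    and "\<forall>t>0. x t = rearr x t"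
    and "c > 0"
  shows "((\<lambda>T. (1 / ln T) * (LBINT t=1..T. (1 / (t * \<psi> t)) * (LBINT s=0..c * t * \<psi> t. x s))
              - (1 / ln T) * (LBINT t=1..T. (1 / (t * \<psi> t)) * (LBINT s=0..t. x s)))
          \<longlongrightarrow> 0) at_top"
proof -
  have top: "filterlim \<psi> at_top at_top" using assms(1) unfolding Psi_class_def by auto
  from assms(3) obtain Bx C where Bx: "\<And>u. u > 0 \<Longrightarrow> \<bar>x u\<bar> \<le> Bx"
    and Cb: "\<And>t. t > 0 \<Longrightarrow> (1 / \<psi> t) * (LBINT s=0..t. rearr x s) \<le> C"
    unfolding M_psi_def by auto
  have ppos: "\<And>t. 0 < t \<Longrightarrow> 0 < \<psi> t" using Psi_pos[OF assms(1)] by blast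
  have pmono: "\<And>s t. 0 \<le> s \<Longrightarrow> s \<le> t \<Longrightarrow> \<psi> s \<le> \<psi> t" using Psi_mono[OF assms(1)] by blast
  define \<psi>m :: "real \<Rightarrow> real" where "\<psi>m t = \<psi> (max t 0)" for t
  define xm :: "real \<Rightarrow> real" where "xm s = (if 0 < s then x s else Bx)" for s
  define Xm :: "real \<Rightarrow> real" where "Xm u = (LBINT s=0..max u 0. xm s)" for u
  have Bx0: "0 \<le> Bx" using Bx[of 1] by simp
  have xm_nonneg: "0 \<le> xm s" for s unfolding xm_def using assms(4) Bx0 by (auto intro: less_imp_le)
  have xm_bound: "\<bar>xm s\<bar> \<le> Bx" for s unfolding xm_def using Bx Bx0 by auto
  have xm_anti: "xm t \<le> xm s" if "s \<le> t" for s t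
  proof (cases "0 < s")
    case True
    then have "x t \<le> x s" using assms(5) that by (auto simp: monotone_on_def)
    then show ?thesis unfolding xm_def using True that by simp
  next
    case False
    then show ?thesis unfolding xm_def using Bx[of t] by auto
  qed
  have "(\<lambda>s. - xm s) \<in> borel_measurable borel"
    by (rule borel_measurable_mono) (auto simp: mono_def intro: xm_anti)
  then have xm_meas: "xm \<in> borel_measurable borel"
    using borel_measurable_uminus[of "\<lambda>s. - xm s"] by simp
  have xm_sint: "set_integrable lborel {p<..<q} xm" for p q :: real
  proof -
    have "set_integrable lborel {p..q} xm" by (rule bdd_integrable_on(2)[OF xm_meas xm_bound])
    then show ?thesis by (rule set_integrable_subset) auto
  qed
  have xm_iint: "interval_lebesgue_integrable lborel (ereal p) (ereal q) xm" for p q :: real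
    unfolding interval_lebesgue_integrable_def using xm_sint by simp
  have int_nonneg: "0 \<le> (LBINT s=ereal p..ereal q. xm s)" if "p \<le> q" for p q :: real
    using that xm_nonneg
    by (simp add: interval_lebesgue_integral_def set_lebesgue_integral_def)
  have Xm_mono: "Xm u \<le> Xm v" if "u \<le> v" for u v
  proof -
    define u' :: real where "u' = max u 0"
    define v' :: real where "v' = max v 0"
    have uv: "0 \<le> u'" "u' \<le> v'" unfolding u'_def v'_def using that by (auto simp: max_def)
    have "(LBINT s=ereal 0..ereal u'. xm s) + (LBINT s=ereal u'..ereal v'. xm s) = (LBINT s=ereal 0..ereal v'. xm s)"
    proof (rule interval_integral_sum)
      have "min (ereal 0) (min (ereal u') (ereal v')) = ereal 0" "max (ereal 0) (max (ereal u') (ereal v')) = ereal v'"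
        using uv by auto
      then show "interval_lebesgue_integrable lborel (min (ereal 0) (min (ereal u') (ereal v'))) (max (ereal 0) (max (ereal u') (ereal v'))) xm"
        using xm_iint by simp
    qed
    moreover have "0 \<le> (LBINT s=ereal u'..ereal v'. xm s)" using int_nonneg uv by simp
    ultimately show ?thesis unfolding Xm_def u'_def[symmetric] v'_def[symmetric] by (simp add: zero_ereal_def)
  qed
  have Xm_nonneg: "0 \<le> Xm u" for u
    using int_nonneg[of 0 "max u 0"] unfolding Xm_def by (simp add: zero_ereal_def)
  have Xm_meas: "Xm \<in> borel_measurable borel"
    by (rule borel_measurable_mono) (auto simp: mono_def intro: Xm_mono)
  have Xm_eq: "Xm u = (LBINT s=0..u. x s)" if "0 \<le> u" for u
  proof -
    have "Xm u = (LBINT s=0..u. xm s)" unfolding Xm_def using that by simp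
    also have "\<dots> = (LBINT s=0..u. x s)"
      by (rule interval_integral_cong) (use that in \<open>auto simp: xm_def einterval_iff min_def max_def\<close>)
    finally show ?thesis .
  qed
  have Xm_le: "Xm u \<le> C * \<psi>m u" if u: "0 < u" for u
  proof -
    have "Xm u = (LBINT s=0..u. rearr x s)"
      unfolding Xm_eq[OF less_imp_le[OF u]]
      by (rule interval_integral_cong) (use u assms(6) in \<open>auto simp: einterval_iff min_def max_def\<close>)
    moreover have "(1 / \<psi> u) * (LBINT s=0..u. rearr x s) \<le> C" using Cb[OF u] .
    ultimately have "Xm u / \<psi> u \<le> C" by simp
    then show ?thesis unfolding \<psi>m_def using ppos[OF u] u by (simp add: divide_le_eq mult.commute)
  qed
  have pm_meas: "\<psi>m \<in> borel_measurable borel"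
    by (rule borel_measurable_mono) (auto simp: mono_def \<psi>m_def intro: pmono)
  interpret L \<psi>m Xm c C
  proof
    show "\<And>t. 0 < t \<Longrightarrow> 0 < \<psi>m t" unfolding \<psi>m_def using ppos by simp
    show "\<And>s t. 0 < s \<Longrightarrow> s \<le> t \<Longrightarrow> \<psi>m s \<le> \<psi>m t" unfolding \<psi>m_def using pmono by simp
    have ev: "eventually (\<lambda>t. \<psi> t = \<psi>m t) at_top"
      using eventually_ge_at_top[of 0] by eventually_elim (simp add: \<psi>m_def)
    show "filterlim \<psi>m at_top at_top" using top filterlim_cong[OF refl refl ev] by simp
    have ev2: "eventually (\<lambda>t. \<psi> (t * \<psi> t) / \<psi> t = \<psi>m (t * \<psi>m t) / \<psi>m t) at_top"
      using eventually_gt_at_top[of 0]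
    proof eventually_elim
      case (elim t)
      then show ?case using ppos[of t] by (simp add: \<psi>m_def)
    qed
    show "((\<lambda>t. \<psi>m (t * \<psi>m t) / \<psi>m t) \<longlongrightarrow> 1) at_top"
      using assms(2) tendsto_cong[OF ev2] by simp
    show "\<And>u. 0 \<le> u \<Longrightarrow> 0 \<le> Xm u" using Xm_nonneg by simp
    show "\<And>u v. 0 \<le> u \<Longrightarrow> u \<le> v \<Longrightarrow> Xm u \<le> Xm v" using Xm_mono by simp
    show "\<And>u. 0 < u \<Longrightarrow> Xm u \<le> C * \<psi>m u" using Xm_le by simp
    show "0 < c" using assms(7) .
    show "\<psi>m \<in> borel_measurable borel" by (rule pm_meas)
    show "Xm \<in> borel_measurable borel" by (rule Xm_meas)
  qed
  have eqA: "(LBINT t=1..T. (1 / (t * \<psi> t)) * (LBINT s=0..c * t * \<psi> t. x s)) = integral {1..T} a"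
    if T: "1 \<le> T" for T
  proof -
    have "(LBINT t=1..T. (1 / (t * \<psi> t)) * (LBINT s=0..c * t * \<psi> t. x s)) = (LBINT t=1..T. a t)"
    proof -
      have pw: "(1 / (t * \<psi> t)) * (LBINT s=0..c * t * \<psi> t. x s) = a t" if t: "0 < t" for t
      proof -
        have pos: "0 \<le> c * t * \<psi> t" using t ppos[OF t] assms(7) by simp
        show ?thesis unfolding a_def \<psi>m_def using t Xm_eq[OF pos] by simp
      qed
      show ?thesis
        by (rule interval_integral_cong) (use pw T in \<open>auto simp: einterval_iff min_def max_def split: if_splits\<close>)
    qed
    also have "\<dots> = integral {1..T} a" using T a_sint[of 1 T] interval_integral_eq_integral[of 1 T a] by (simp add: one_ereal_def)
    finally show ?thesis .
  qed
  have eqB: "(LBINT t=1..T. (1 / (t * \<psi> t)) * (LBINT s=0..t. x s)) = integral {1..T} b"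
    if T: "1 \<le> T" for T
  proof -
    have "(LBINT t=1..T. (1 / (t * \<psi> t)) * (LBINT s=0..t. x s)) = (LBINT t=1..T. b t)"
    proof -
      have pw: "(1 / (t * \<psi> t)) * (LBINT s=0..t. x s) = b t" if t: "0 < t" for t
        unfolding b_def \<psi>m_def using t Xm_eq[of t] by simp
      show ?thesis
        by (rule interval_integral_cong) (use pw T in \<open>auto simp: einterval_iff min_def max_def split: if_splits\<close>)
    qed
    also have "\<dots> = integral {1..T} b" using T b_sint[of 1 T] interval_integral_eq_integral[of 1 T b] by (simp add: one_ereal_def)
    finally show ?thesis .
  qed
  have ev: "eventually (\<lambda>T. (1 / ln T) * integral {1..T} a - (1 / ln T) * integral {1..T} b =
      (1 / ln T) * (LBINT t=1..T. (1 / (t * \<psi> t)) * (LBINT s=0..c * t * \<psi> t. x s))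
              - (1 / ln T) * (LBINT t=1..T. (1 / (t * \<psi> t)) * (LBINT s=0..t. x s))) at_top"
    using eventually_ge_at_top[of 1]
  proof eventually_elim
    case (elim T)
    show ?case by (simp only: eqA[OF elim] eqB[OF elim])
  qed
  show ?thesis using limit tendsto_cong[OF ev] by simp
qed

end
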